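(* Let $P=\{\mathbf{x}^{(\mathrm{p})}_i\}_{i=1}^{n_{\mathrm p}}$ and $U=\{\mathbf{x}^{(\mathrm{u})}_i\}_{i=1}^{n_{\mathrm u}}$ be finite sets of points in $\mathbb{R}^d$, let $\pi\in(0,1)$, $w_{\mathrm p}=\pi/n_{\mathrm p}$ and $w_{\mathrm u}=1/n_{\mathrm u}$. Let $P'\subseteq P$ and $U'\subseteq U$, not both empty. For a loss $\ell:\mathbb{R}\times\{-1,+1\}\to\mathbb{R}$ define $$\hat R_{\mathrm{nnPU}}(v;P',U')=\sum_{\mathbf{x}\in P'}w_{\mathrm p}\,\ell(v,+1)+\max\Bigl\{0,\ \sum_{\mathbf{x}\in U'}w_{\mathrm u}\,\ell(v,-1)-\sum_{\mathbf{x}\in P'}w_{\mathrm p}\,\ell(v,-1)\Bigr\},$$ and $\hat R^*_{\mathrm{nnPU}}(P',U')=\inf_{v\in\mathbb{R}}\hat R_{\mathrm{nnPU}}(v;P',U')$. Let $W_{\mathrm p}=|P'|w_{\mathrm p}$, $W_{\mathrm n}=|U'|w_{\mathrm u}-|P'|w_{\mathrm p}$, and $v^*=\frac{W_{\mathrm p}}{W_{\mathrm p}+W_{\mathrm n}}$, where $v^*=+\infty$ if $W_{\mathrm p}+W_{\mathrm n}=0$. (a) For the quadratic loss $\ell(v,y)=(1-vy)^2$: $$\hat R^*_{\mathrm{nnPU}}(P',U')=\begin{cases}0,& v^*>1,\\ 4(W_{\mathrm p}+W_{\mathrm n})\,v^*(1-v^* ),&\text{otherwise.}\end{cases}$$ (b)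 For the logistic loss $\ell(v,y)=\ln(1+\exp(-vy))$: $$\hat R^*_{\mathrm{nnPU}}(P',U')=\begin{cases}(W_{\mathrm p}+W_{\mathrm n})\bigl(-v^*\ln v^*-(1-v^* )\ln(1-v^* )\bigr),& 0<v^*<1,\\ 0,&\text{otherwise.}\end{cases}$$
   Context: This is the non-negative PU (nnPU) risk estimate restricted to a decision-tree node containing positive examples $P'$ and unlabeled examples $U'$, when a constant score $v$ is predicted at that node. The value $v^*=+\infty$ counts as $v^*>1$. *)

theory Defs
  imports "HOL-Analysis.Analysis" "HOL-Library.Extended_Real"
begin

definition quad_loss :: "real \<Rightarrow> real \<Rightarrow> real" where
  "quad_loss v y = (1 - v * y)^2"

definition logistic_loss :: "real \<Rightarrow> real \<Rightarrow> real" where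
  "logistic_loss v y = ln (1 + exp (- v * y))"

definition w_p :: "real \<Rightarrow> 'a set \<Rightarrow> real" where
  "w_p \<pi> P = \<pi> / real (card P)"

definition w_u :: "'a set \<Rightarrow> real" where
  "w_u U = 1 / real (card U)"

definition nnPU_risk ::
  "(real \<Rightarrow> real \<Rightarrow> real) \<Rightarrow> real \<Rightarrow> 'a set \<Rightarrow> 'a set \<Rightarrow> 'a set \<Rightarrow> 'a set \<Rightarrow> real \<Rightarrow> real" where
  "nnPU_risk loss \<pi> P U P' U' v =
     (\<Sum>x\<in>P'. w_p \<pi> P * loss v 1)
     + max 0 ((\<Sum>x\<in>U'. w_u U * loss v (-1)) - (\<Sum>x\<in>P'. w_p \<pi> P * loss v (-1)))"

definition nnPU_opt ::
  "(real \<Rightarrow> real \<Rightarrow> real) \<Rightarrow> real \<Rightarrow> 'a set \<Rightarrow> 'a set \<Rightarrow> 'a set \<Rightarrow> 'a set \<Rightarrow> real" where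
  "nnPU_opt loss \<pi> P U P' U' = (INF v. nnPU_risk loss \<pi> P U P' U' v)"

definition W_pos :: "real \<Rightarrow> 'a set \<Rightarrow> 'a set \<Rightarrow> real" where
  "W_pos \<pi> P P' = real (card P') * w_p \<pi> P"

definition W_neg :: "real \<Rightarrow> 'a set \<Rightarrow> 'a set \<Rightarrow> 'a set \<Rightarrow> 'a set \<Rightarrow> real" where
  "W_neg \<pi> P U P' U' = real (card U') * w_u U - real (card P') * w_p \<pi> P"

definition v_star :: "real \<Rightarrow> 'a set \<Rightarrow> 'a set \<Rightarrow> 'a set \<Rightarrow> 'a set \<Rightarrow> ereal" where
  "v_star \<pi> P U P' U' =
     (let Wp = W_pos \<pi> P P'; Wn = W_neg \<pi> P U P' U'
      in if Wp + Wn = 0 then \<infinity> else ereal (Wp / (Wp + Wn)))"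

end

theory Submission
  imports Defs "HOL-Real_Asymp.Real_Asymp"
begin

lemma INF_attained:
  fixes f :: "real \<Rightarrow> real"
  assumes "\<And>v. m \<le> f v" "f z = m"
  shows "(INF v. f v) = m"
  by (rule cInf_eq_minimum) (use assms in \<open>auto intro: image_eqI[of _ _ z]\<close>)

lemma INF_limit:
  fixes f :: "real \<Rightarrow> real"
  assumes "\<And>v. m \<le> f v" "(f \<longlongrightarrow> m) F" "F \<noteq> bot"
  shows "(INF v. f v) = m"
proof (rule antisym)
  have bdd: "bdd_below (range f)" using assms(1) by (intro bdd_belowI[where m=m]) auto
  have ev: "\<forall>\<^sub>F i in F. (INF v. f v) \<le> f i"
    by (rule always_eventually) (simp add: cINF_lower[OF bdd])
  show "(INF v. f v) \<le> m"
    using tendsto_lowerbound[OF assms(2) ev assms(3)] .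
  show "m \<le> (INF v. f v)" by (rule cINF_greatest) (simp_all add: assms(1))
qed

lemma at_top_nb: "(at_top :: real filter) \<noteq> bot" by simp
lemma at_bot_nb: "(at_bot :: real filter) \<noteq> bot" by simp

lemma quad_inf:
  fixes a b :: real
  assumes "0 \<le> a" "0 \<le> b"
  shows "(INF v. a * (1 - v)^2 + max 0 ((b - a) * (1 + v)^2)) =
    (if b = 0 \<or> a > b then 0 else 4 * b * (a/b) * (1 - a/b))"
proof (cases "b = 0 \<or> a \<ge> b")
  case True
  have "(INF v. a * (1 - v)^2 + max 0 ((b - a) * (1 + v)^2)) = 0"
    by (rule INF_attained[where z=1]) (use True assms in \<open>auto simp: mult_nonpos_nonneg\<close>)
  then show ?thesis using True assms by auto
next
  case False
  then have b: "b > 0" "a < b" using assms by auto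
  have eq: "4 * b * (a/b) * (1 - a/b) = 4*a*(b-a)/b" using b by (simp add: field_simps)
  have "(INF v. a * (1 - v)^2 + max 0 ((b - a) * (1 + v)^2)) = 4*a*(b-a)/b"
  proof (rule INF_attained[where z="(2*a-b)/b"])
    fix v
    have "max 0 ((b - a) * (1 + v)^2) = (b - a) * (1 + v)^2" using b by auto
    moreover have "b * (a * (1 - v)^2 + (b - a) * (1 + v)^2) = (b * v + b - 2 * a)^2 + 4*a*(b-a)"
      by (simp add: power2_eq_square algebra_simps)
    moreover have "0 \<le> (b * v + b - 2 * a)^2" by simp
    ultimately show "4*a*(b-a)/b \<le> a * (1 - v)^2 + max 0 ((b - a) * (1 + v)^2)"
      using b by (simp add: field_simps)
  next
    have e1: "1 + (2*a-b)/b = 2*a/b" and e2: "1 - (2*a-b)/b = 2*(b-a)/b" using b by (auto simp: field_simps)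
    have mx: "max 0 ((b - a) * (2*a/b)^2) = (b - a) * (2*a/b)^2" using b by auto
    show "a * (1 - (2*a-b)/b)^2 + max 0 ((b - a) * (1 + (2*a-b)/b)^2) = 4*a*(b-a)/b"
      unfolding e1 e2 mx using b by (simp add: field_simps power2_eq_square)
  qed
  then show ?thesis using False eq by auto
qed

lemma log_target:
  fixes a b :: real assumes "0 < a" "a < b"
  shows "b * (- (a/b) * ln (a/b) - (1 - a/b) * ln (1 - a/b)) = a * (ln b - ln a) + (b - a) * (ln b - ln (b - a))"
proof -
  have q1: "1 - a/b = (b-a)/b" using assms by (simp add: field_simps)
  have q2: "ln (a/b) = ln a - ln b" "ln ((b-a)/b) = ln (b-a) - ln b" using assms by (auto simp: ln_div)
  show ?thesis unfolding q1 q2 using assms by (simp add: field_simps)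
qed

lemma gibbs:
  fixes a b v :: real assumes "0 < a" "a < b"
  shows "a * (ln b - ln a) + (b - a) * (ln b - ln (b - a)) \<le> a * ln (1 + exp (- v)) + (b - a) * ln (1 + exp v)"
proof -
  define E where "E = exp v"
  have E: "E > 0" unfolding E_def by simp
  have em: "exp (-v) = 1/E" unfolding E_def by (simp add: exp_minus field_simps)
  define t1 where "t1 = (b/a) / (1 + 1/E)"
  define t2 where "t2 = (b/(b-a)) / (1 + E)"
  have t1p: "t1 > 0" and t2p: "t2 > 0" unfolding t1_def t2_def using assms E by (simp_all add: add_pos_pos)
  have pos1: "1 + 1/E > 0" "1 + E > 0" using E by (simp_all add: add_pos_pos)
  have "ln t1 = ln (b/a) - ln (1 + 1/E)" unfolding t1_def
    by (rule ln_divide_pos) (use assms pos1 in auto)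
  moreover have "ln (b/a) = ln b - ln a" by (rule ln_divide_pos) (use assms in auto)
  ultimately have l1: "ln t1 = ln b - ln a - ln (1 + 1/E)" by simp
  have "ln t2 = ln (b/(b-a)) - ln (1 + E)" unfolding t2_def
    by (rule ln_divide_pos) (use assms pos1 in auto)
  moreover have "ln (b/(b-a)) = ln b - ln (b-a)" by (rule ln_divide_pos) (use assms in auto)
  ultimately have l2: "ln t2 = ln b - ln (b - a) - ln (1 + E)" by simp
  have i1: "ln t1 \<le> t1 - 1" using t1p by (rule ln_le_minus_one)
  have i2: "ln t2 \<le> t2 - 1" using t2p by (rule ln_le_minus_one)
  have ee: "1 + 1/E = (1+E)/E" using E by (simp add: field_simps)
  have "a * t1 = (a * (b/a)) * E / (1 + E)" unfolding t1_def ee by simp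
  moreover have "a * (b/a) = b" using assms by simp
  ultimately have s1: "a * t1 = b * E / (1 + E)" by simp
  have "(b - a) * t2 = ((b - a) * (b/(b-a))) / (1 + E)" unfolding t2_def by simp
  moreover have "(b - a) * (b/(b-a)) = b" using assms by simp
  ultimately have s2: "(b - a) * t2 = b / (1 + E)" by simp
  have "b * E / (1 + E) + b / (1 + E) = (b * (1 + E)) / (1 + E)"
    by (simp add: add_divide_distrib[symmetric] algebra_simps)
  then have s3: "b * E / (1 + E) + b / (1 + E) = b" using pos1 by simp
  have sum0: "a * (t1 - 1) + (b - a) * (t2 - 1) = 0"
  proof -
    have "a * (t1 - 1) + (b - a) * (t2 - 1) = a * t1 + (b - a) * t2 - b" by (simp add: algebra_simps)
    then show ?thesis using s1 s2 s3 by linarith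
  qed
  have "a * ln t1 + (b - a) * ln t2 \<le> 0"
  proof -
    have "a * ln t1 \<le> a * (t1 - 1)" using i1 assms by (intro mult_left_mono) auto
    moreover have "(b - a) * ln t2 \<le> (b - a) * (t2 - 1)" using i2 assms by (intro mult_left_mono) auto
    ultimately show ?thesis using sum0 by linarith
  qed
  moreover have "a * ln t1 + (b - a) * ln t2 = a * (ln b - ln a) + (b - a) * (ln b - ln (b - a)) - (a * ln (1 + 1/E) + (b - a) * ln (1 + E))"
    unfolding l1 l2 by (simp add: algebra_simps)
  ultimately show ?thesis unfolding em E_def[symmetric] by linarith
qed

lemma log_inf:
  fixes a b :: real
  assumes "0 \<le> a" "0 \<le> b"
  shows "(INF v. a * ln (1 + exp (- v)) + max 0 ((b - a) * ln (1 + exp v))) =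
    (if 0 < a \<and> a < b then b * (- (a/b) * ln (a/b) - (1 - a/b) * ln (1 - a/b)) else 0)"
proof -
  consider "b \<le> a" | "a = 0" "0 < b" | "0 < a" "a < b" using assms by linarith
  then show ?thesis
  proof cases
    case 1
    have f: "(\<lambda>v. a * ln (1 + exp (- v)) + max 0 ((b - a) * ln (1 + exp v))) = (\<lambda>v. a * ln (1 + exp (- v)))"
    proof
      fix v
      have "(b - a) * ln (1 + exp v) \<le> 0" using 1 by (intro mult_nonpos_nonneg) auto
      then show "a * ln (1 + exp (- v)) + max 0 ((b - a) * ln (1 + exp v)) = a * ln (1 + exp (- v))" by simp
    qed
    have lim: "((\<lambda>v::real. ln (1 + exp (- v))) \<longlongrightarrow> 0) at_top" by real_asymp
    have "(INF v. a * ln (1 + exp (- v))) = 0"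
      by (rule INF_limit[OF _ tendsto_mult_right_zero[OF lim] at_top_nb]) (use assms in auto)
    then show ?thesis unfolding f using 1 by simp
  next
    case 2
    have f: "(\<lambda>v. a * ln (1 + exp (- v)) + max 0 ((b - a) * ln (1 + exp v))) = (\<lambda>v. b * ln (1 + exp v))"
      using 2 by auto
    have lim: "((\<lambda>v::real. ln (1 + exp v)) \<longlongrightarrow> 0) at_bot" by real_asymp
    have "(INF v. b * ln (1 + exp v)) = 0"
      by (rule INF_limit[OF _ tendsto_mult_right_zero[OF lim] at_bot_nb]) (use assms in auto)
    then show ?thesis unfolding f using 2 by simp
  next
    case 3
    have f: "(\<lambda>v. a * ln (1 + exp (- v)) + max 0 ((b - a) * ln (1 + exp v))) = (\<lambda>v. a * ln (1 + exp (- v)) + (b - a) * ln (1 + exp v))"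
      using 3 by auto
    have "(INF v. a * ln (1 + exp (- v)) + (b - a) * ln (1 + exp v)) = a * (ln b - ln a) + (b - a) * (ln b - ln (b - a))"
    proof (rule INF_attained[where z="ln (a/(b-a))"])
      fix v show "a * (ln b - ln a) + (b - a) * (ln b - ln (b - a)) \<le> a * ln (1 + exp (- v)) + (b - a) * ln (1 + exp v)"
        using gibbs[OF 3] .
    next
      have e1: "exp (ln (a/(b-a))) = a/(b-a)" using 3 by simp
      have e2: "exp (- ln (a/(b-a))) = (b-a)/a" using 3 by (simp add: exp_minus)
      have "1 + a/(b-a) = b/(b-a)" "1 + (b-a)/a = b/a" using 3 by (auto simp: field_simps)
      then show "a * ln (1 + exp (- ln (a/(b-a)))) + (b - a) * ln (1 + exp (ln (a/(b-a)))) = a * (ln b - ln a) + (b - a) * (ln b - ln (b - a))"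
        unfolding e1 e2 using 3 by (simp add: ln_div)
    qed
    then show ?thesis unfolding f using 3 log_target[OF 3] by simp
  qed
qed

lemma risk_gen:
  "nnPU_risk loss \<pi> P U P' U' v = W_pos \<pi> P P' * loss v 1
     + max 0 ((W_pos \<pi> P P' + W_neg \<pi> P U P' U' - W_pos \<pi> P P') * loss v (-1))"
  by (simp add: nnPU_risk_def W_pos_def W_neg_def algebra_simps)

theorem proposition2:
  fixes P U P' U' :: "(real ^ 'd) set" and \<pi> :: real
  assumes "finite P" and "finite U"
    and "0 < \<pi>" and "\<pi> < 1"
    and "P' \<subseteq> P" and "U' \<subseteq> U"
    and "P' \<noteq> {} \<or> U' \<noteq> {}"
  defines "Wp \<equiv> W_pos \<pi> P P'"
    and "Wn \<equiv> W_neg \<pi> P U P' U'"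
    and "vs \<equiv> v_star \<pi> P U P' U'"
  shows "(nnPU_opt quad_loss \<pi> P U P' U' =
           (if vs > 1 then 0
            else 4 * (Wp + Wn) * real_of_ereal vs * (1 - real_of_ereal vs)))
         \<and> (nnPU_opt logistic_loss \<pi> P U P' U' =
           (if 0 < vs \<and> vs < 1
            then (Wp + Wn) * (- real_of_ereal vs * ln (real_of_ereal vs)
                   - (1 - real_of_ereal vs) * ln (1 - real_of_ereal vs))
            else 0))"
proof -
  define a where "a = Wp"
  define b where "b = Wp + Wn"
  have a0: "0 \<le> a" unfolding a_def Wp_def W_pos_def w_p_def using assms(3) by simp
  have b0: "0 \<le> b" unfolding b_def Wp_def Wn_def W_pos_def W_neg_def w_u_def by simp
  have oq: "nnPU_opt quad_loss \<pi> P U P' U' = (INF v. a * (1 - v)^2 + max 0 ((b - a) * (1 + v)^2))"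
    unfolding nnPU_opt_def risk_gen a_def b_def Wp_def Wn_def quad_loss_def by simp
  have ol: "nnPU_opt logistic_loss \<pi> P U P' U' = (INF v. a * ln (1 + exp (- v)) + max 0 ((b - a) * ln (1 + exp v)))"
    unfolding nnPU_opt_def risk_gen a_def b_def Wp_def Wn_def logistic_loss_def by simp
  have vs: "vs = (if b = 0 then \<infinity> else ereal (a / b))"
    unfolding vs_def v_star_def a_def b_def Wp_def Wn_def Let_def by simp
  show ?thesis
  proof (cases "b = 0")
    case True
    then show ?thesis unfolding oq ol quad_inf[OF a0 b0] log_inf[OF a0 b0] vs by simp
  next
    case False
    then have bp: "b > 0" using b0 by simp
    have c1: "(a / b > 1) = (a > b)" using bp by (simp add: field_simps)
    have c2: "(0 < a / b \<and> a / b < 1) = (0 < a \<and> a < b)" using bp by (simp add: field_simps)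
    show ?thesis unfolding oq ol quad_inf[OF a0 b0] log_inf[OF a0 b0] vs
      using False c1 c2 by (simp add: b_def[symmetric])
  qed
qed

end
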